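(* Let $(A,W)$ be a Pratt comonoid, let $x_0\supseteq x_1\supseteq\cdots$ be an $\omega$-indexed descending chain of elements of $W$, and let $y_0\subseteq y_1\subseteq\cdots$ be an $\omega$-indexed ascending chain of elements of $W$. Suppose that $\bigcap_{m\in\omega}x_m=\emptyset$, and that for no pair $(m,n)\in\omega\times\omega$ does $y_n$ contain $x_m\cap\bigcup_{i\in\omega}y_i$. Then $W$ has at least continuum cardinality; in fact $W$ contains a complete sublattice isomorphic to the lattice of all subsets of $\omega$.
   Context: A Pratt comonoid is a pair $(A,W)$ where $A$ is a set and $W$ is a set of subsets of $A$ such that (i) $\emptyset\in W$ and $A\in W$; (ii) whenever $C\subseteq A\times A$ is such that for every $a\in A$ both the $a$-th row $\{b\mid (a,b)\in C\}$ and the $a$-th column $\{b\mid (b,a)\in C\}$ belong to $W$ (a crossword over $W$), the diagonal $\{b\mid (b,b)\in C\}$ also belongs to $W$. A complete sublattice of $W$ is a subset of $W$ closed under arbitrary (possibly infinite) unions and intersections taken in the power set of $A$, not necessarily containing $\emptyset$ or $A$. *)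

theory Defs
  imports Main
begin

definition crossword :: "'a set \<Rightarrow> 'a set set \<Rightarrow> ('a \<times> 'a) set \<Rightarrow> bool" where
  "crossword A W C \<longleftrightarrow> C \<subseteq> A \<times> A \<and>
     (\<forall>a\<in>A. {b. (a, b) \<in> C} \<in> W \<and> {b. (b, a) \<in> C} \<in> W)"

definition diagonal :: "('a \<times> 'a) set \<Rightarrow> 'a set" where
  "diagonal C = {b. (b, b) \<in> C}"

definition pratt_comonoid :: "'a set \<Rightarrow> 'a set set \<Rightarrow> bool" where
  "pratt_comonoid A W \<longleftrightarrow> W \<subseteq> Pow A \<and> {} \<in> W \<and> A \<in> W \<and>
     (\<forall>C. crossword A W C \<longrightarrow> diagonal C \<in> W)"

text \<open>A complete sublattice of W: a subset of W closed under unions and intersections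
  of arbitrary nonempty subfamilies (taken in the power set of A; the empty family is
  excluded since a complete sublattice need not contain the empty set or A).\<close>
definition complete_sublattice :: "'a set set \<Rightarrow> 'a set set \<Rightarrow> bool" where
  "complete_sublattice W S \<longleftrightarrow> S \<subseteq> W \<and>
     (\<forall>T. T \<subseteq> S \<and> T \<noteq> {} \<longrightarrow> \<Union>T \<in> S \<and> \<Inter>T \<in> S)"

end

theory Submission
  imports Defs
begin

lemma col_lemma:
  fixes u :: "nat \<Rightarrow> 'a set"
  assumes dec: "\<And>n. u (Suc n) \<subseteq> u n" and ex: "\<exists>k. a \<notin> u k"
  shows "(k0 \<le> (LEAST k. a \<notin> u k)) \<longleftrightarrow> (k0 = 0 \<or> a \<in> u (k0 - 1))"
proof
  assume h: "k0 \<le> (LEAST k. a \<notin> u k)"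
  show "k0 = 0 \<or> a \<in> u (k0 - 1)"
  proof (cases k0)
    case 0 then show ?thesis by simp
  next
    case (Suc j)
    have "j < (LEAST k. a \<notin> u k)" using h Suc by simp
    then have "\<not> (a \<notin> u j)" by (rule not_less_Least)
    then show ?thesis using Suc by simp
  qed
next
  assume h: "k0 = 0 \<or> a \<in> u (k0 - 1)"
  show "k0 \<le> (LEAST k. a \<notin> u k)"
  proof (rule ccontr)
    assume nt: "\<not> k0 \<le> (LEAST k. a \<notin> u k)"
    then have k0: "k0 \<noteq> 0" by simp
    have lt: "(LEAST k. a \<notin> u k) \<le> k0 - 1" using nt by simp
    have "a \<notin> u (LEAST k. a \<notin> u k)" using ex by (rule LeastI_ex)
    moreover have "u (k0 - 1) \<subseteq> u (LEAST k. a \<notin> u k)"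
      by (rule lift_Suc_antimono_le[of u, OF dec lt])
    ultimately show False using h k0 by auto
  qed
qed

lemma diag_lemma:
  assumes P: "pratt_comonoid A W"
    and uW: "\<And>n. u n \<in> W" and dec: "\<And>n. u (Suc n) \<subseteq> u n"
    and ex: "\<And>a. a \<in> A \<Longrightarrow> \<exists>k. a \<notin> u k"
    and FW: "\<And>n. F n \<in> W" and Fmono: "\<And>n. F n \<subseteq> F (Suc n)"
  shows "{a \<in> A. a \<in> F (LEAST k. a \<notin> u k)} \<in> W"
proof -
  let ?m = "\<lambda>a. LEAST k. a \<notin> u k"
  define C where "C = {(a,b). a \<in> A \<and> b \<in> A \<and> b \<in> F (?m a)}"
  have WA: "W \<subseteq> Pow A" "{} \<in> W" "A \<in> W" and cw: "\<And>C. crossword A W C \<Longrightarrow> diagonal C \<in> W"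
    using P unfolding pratt_comonoid_def by auto
  have FA: "F n \<subseteq> A" for n using FW WA by auto
  have "crossword A W C"
    unfolding crossword_def
  proof (intro conjI ballI)
    show "C \<subseteq> A \<times> A" unfolding C_def by auto
  next
    fix a assume "a \<in> A"
    have "{b. (a, b) \<in> C} = F (?m a)" unfolding C_def using \<open>a \<in> A\<close> FA by auto
    then show "{b. (a, b) \<in> C} \<in> W" using FW by simp
  next
    fix b assume bA: "b \<in> A"
    show "{a. (a, b) \<in> C} \<in> W"
    proof (cases "\<exists>k. b \<in> F k")
      case False
      then have "{a. (a, b) \<in> C} = {}" unfolding C_def by auto
      then show ?thesis using WA by simp
    next
      case True
      define k0 where "k0 = (LEAST k. b \<in> F k)"
      have iff: "b \<in> F i \<longleftrightarrow> k0 \<le> i" for i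
      proof
        assume "b \<in> F i" then show "k0 \<le> i" unfolding k0_def by (rule Least_le)
      next
        assume "k0 \<le> i"
        moreover have "b \<in> F k0" unfolding k0_def using True by (rule LeastI_ex)
        ultimately show "b \<in> F i" using lift_Suc_mono_le[of F, OF Fmono] by blast
      qed
      have eq: "{a. (a, b) \<in> C} = {a \<in> A. k0 = 0 \<or> a \<in> u (k0 - 1)}"
      proof (intro set_eqI iffI)
        fix a assume "a \<in> {a. (a, b) \<in> C}"
        then have aA: "a \<in> A" and "k0 \<le> ?m a" unfolding C_def using iff by auto
        then show "a \<in> {a \<in> A. k0 = 0 \<or> a \<in> u (k0 - 1)}"
          using col_lemma[OF dec ex[OF aA]] by auto
      next
        fix a assume "a \<in> {a \<in> A. k0 = 0 \<or> a \<in> u (k0 - 1)}"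
        then have aA: "a \<in> A" and "k0 = 0 \<or> a \<in> u (k0 - 1)" by auto
        then have "k0 \<le> ?m a" using col_lemma[OF dec ex[OF aA]] by auto
        then show "a \<in> {a. (a, b) \<in> C}" unfolding C_def using iff aA bA by auto
      qed
      show ?thesis
      proof (cases "k0 = 0")
        case True then have "{a. (a, b) \<in> C} = A" using eq by auto
        then show ?thesis using WA by simp
      next
        case False then have "{a. (a, b) \<in> C} = u (k0 - 1)" using eq uW WA by auto
        then show ?thesis using uW by simp
      qed
    qed
  qed
  then have "diagonal C \<in> W" by (rule cw)
  moreover have "diagonal C = {a \<in> A. a \<in> F (?m a)}" unfolding diagonal_def C_def by auto
  ultimately show ?thesis by simp
qed

lemma lat_both:
  assumes QP: "\<And>k. Q k \<subseteq> P k" and Zne: "Z \<noteq> {}"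
    and phi: "\<And>X. \<phi> X = {c\<in>A. c \<in> (if g c \<in> X then P (g c) else Q (g c))}"
  shows "\<Union>(\<phi>`Z) = \<phi>(\<Union>Z)" "\<Inter>(\<phi>`Z) = \<phi>(\<Inter>Z)"
proof -
  have mem: "c \<in> \<phi> X \<longleftrightarrow> c\<in>A \<and> (g c \<in> X \<longrightarrow> c \<in> P (g c)) \<and> (g c \<notin> X \<longrightarrow> c \<in> Q (g c))" for c X
    using phi[of X] by auto
  obtain X0 where X0: "X0 \<in> Z" using Zne by blast
  show "\<Union>(\<phi>`Z) = \<phi>(\<Union>Z)"
  proof (intro set_eqI iffI)
    fix c assume "c \<in> \<Union>(\<phi> ` Z)"
    then obtain X where "X \<in> Z" "c \<in> \<phi> X" by blast
    then show "c \<in> \<phi> (\<Union>Z)" using QP[of "g c"] unfolding mem by blast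
  next
    fix c assume "c \<in> \<phi> (\<Union>Z)"
    then have "\<exists>X\<in>Z. c \<in> \<phi> X" using X0 unfolding mem by blast
    then show "c \<in> \<Union>(\<phi> ` Z)" by blast
  qed
  show "\<Inter>(\<phi>`Z) = \<phi>(\<Inter>Z)"
  proof (intro set_eqI iffI)
    fix c assume "c \<in> \<Inter>(\<phi> ` Z)"
    then have "\<forall>X\<in>Z. c \<in> \<phi> X" by blast
    then show "c \<in> \<phi> (\<Inter>Z)" using X0 unfolding mem by blast
  next
    fix c assume "c \<in> \<phi> (\<Inter>Z)"
    then have "\<forall>X\<in>Z. c \<in> \<phi> X" using QP[of "g c"] unfolding mem by blast
    then show "c \<in> \<Inter>(\<phi> ` Z)" by blast
  qed
qed

theorem proposition7p3:
  fixes A :: "'a set" and W :: "'a set set"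
    and x y :: "nat \<Rightarrow> 'a set"
  assumes "pratt_comonoid A W"
    and "\<And>n. x n \<in> W" and "\<And>n. x (Suc n) \<subseteq> x n"
    and "\<And>n. y n \<in> W" and "\<And>n. y n \<subseteq> y (Suc n)"
    and "(\<Inter>m. x m) = {}"
    and "\<And>m n. \<not> (x m \<inter> (\<Union>i. y i) \<subseteq> y n)"
  shows "(\<exists>f :: nat set \<Rightarrow> 'a set. inj f \<and> range f \<subseteq> W) \<and>
         (\<exists>S \<phi>. complete_sublattice W S \<and> bij_betw \<phi> (UNIV :: nat set set) S \<and>
            (\<forall>X Y. \<phi> X \<subseteq> \<phi> Y \<longleftrightarrow> X \<subseteq> Y))"
proof -
  have WA: "W \<subseteq> Pow A" using assms(1) unfolding pratt_comonoid_def by auto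
  have xA: "x n \<subseteq> A" for n using assms(2) WA by auto
  have xle: "i \<le> j \<Longrightarrow> x j \<subseteq> x i" for i j
    by (rule lift_Suc_antimono_le[of x, OF assms(3)])
  have yle: "i \<le> j \<Longrightarrow> y i \<subseteq> y j" for i j
    by (rule lift_Suc_mono_le[of y, OF assms(5)])
  define Q where "Q = (\<lambda>p q (z :: 'a \<times> nat \<times> nat). fst z \<in> x p \<and> fst z \<notin> y q
      \<and> fst z \<notin> x (fst (snd z)) \<and> fst z \<in> y (snd (snd z)))"
  have Qex: "\<exists>z. Q p q z" for p q
  proof -
    from assms(7)[of p q] obtain w where w: "w \<in> x p" "w \<in> (\<Union>i. y i)" "w \<notin> y q" by blast
    then obtain t where t: "w \<in> y t" by blast
    from assms(6) obtain s where s: "w \<notin> x s" by blast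
    show ?thesis using w t s unfolding Q_def by (intro exI[of _ "(w, s, t)"]) auto
  qed
  define pk where "pk = (\<lambda>p q. SOME z. Q p q z)"
  have pkQ: "Q p q (pk p q)" for p q unfolding pk_def using Qex by (rule someI_ex)
  define st where "st = rec_nat (0::nat, 0::nat)
      (\<lambda>_ s. (fst (snd (pk (fst s) (snd s))), snd (snd (pk (fst s) (snd s)))))"
  define a where "a = (\<lambda>k. fst (st k))"
  define b where "b = (\<lambda>k. snd (st k))"
  define w where "w = (\<lambda>k. fst (pk (a k) (b k)))"
  have stS: "a (Suc k) = fst (snd (pk (a k) (b k)))" "b (Suc k) = snd (snd (pk (a k) (b k)))" for k
    unfolding a_def b_def st_def by simp_all
  have w1: "w k \<in> x (a k)" and w2: "w k \<notin> y (b k)" and w3: "w k \<notin> x (a (Suc k))"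
    and w4: "w k \<in> y (b (Suc k))" for k
    using pkQ[of "a k" "b k"] unfolding Q_def w_def stS by auto
  have aS: "a k < a (Suc k)" for k
  proof (rule ccontr)
    assume "\<not> ?thesis"
    then have "x (a k) \<subseteq> x (a (Suc k))" using xle by simp
    then show False using w1 w3 by blast
  qed
  have bS: "b k < b (Suc k)" for k
  proof (rule ccontr)
    assume "\<not> ?thesis"
    then have "y (b (Suc k)) \<subseteq> y (b k)" using yle by simp
    then show False using w2 w4 by blast
  qed
  have smA: "strict_mono a" using aS by (simp add: strict_mono_Suc_iff)
  have ale: "i \<le> j \<Longrightarrow> a i \<le> a j" for i j using smA by (simp add: strict_mono_less_eq)
  have ble: "b k \<le> b (Suc k)" for k using bS less_imp_le by blast
  define u where "u = (\<lambda>k. x (a (Suc k)))"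
  have uW: "u n \<in> W" for n unfolding u_def using assms(2) by simp
  have udec: "u (Suc n) \<subseteq> u n" for n unfolding u_def using xle ale by simp
  have uex: "\<exists>k. c \<notin> u k" if "c \<in> A" for c
  proof -
    from assms(6) obtain s where s: "c \<notin> x s" by blast
    have "s \<le> a (Suc s)" using strict_mono_imp_increasing[OF smA, of "Suc s"] by simp
    then have "x (a (Suc s)) \<subseteq> x s" using xle by simp
    then show ?thesis using s unfolding u_def by blast
  qed
  define m where "m = (\<lambda>c. LEAST k. c \<notin> u k)"
  have mw: "m (w k) = k" for k
    unfolding m_def
  proof (rule Least_equality)
    show "w k \<notin> u k" unfolding u_def using w3 by simp
  next
    fix j assume "w k \<notin> u j"
    show "k \<le> j"
    proof (rule ccontr)
      assume "\<not> k \<le> j"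
      then have "a (Suc j) \<le> a k" using ale by simp
      then have "x (a k) \<subseteq> u j" unfolding u_def using xle by simp
      then show False using w1 \<open>w k \<notin> u j\<close> by blast
    qed
  qed
  define F where "F = (\<lambda>X k. if k \<in> X then y (b (Suc k)) else y (b k))"
  have FW: "F X n \<in> W" for X n unfolding F_def using assms(4) by simp
  have PQ: "y (b k) \<subseteq> y (b (Suc k))" for k using yle ble by simp
  have Fmono: "F X n \<subseteq> F X (Suc n)" for X n
    unfolding F_def using PQ[of n] PQ[of "Suc n"] by auto
  define \<phi> where "\<phi> = (\<lambda>X. {c \<in> A. c \<in> F X (m c)})"
  have phiW: "\<phi> X \<in> W" for X
    unfolding \<phi>_def m_def by (rule diag_lemma[where F="F X", OF assms(1) uW udec uex FW Fmono])
  have wA: "w k \<in> A" for k using w1 xA by blast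
  have key: "w k \<in> \<phi> X \<longleftrightarrow> k \<in> X" for k X
    unfolding \<phi>_def F_def using mw wA w2 w4 by auto
  have ord: "\<phi> X \<subseteq> \<phi> Y \<longleftrightarrow> X \<subseteq> Y" for X Y
  proof
    assume "\<phi> X \<subseteq> \<phi> Y" then show "X \<subseteq> Y" using key by blast
  next
    assume "X \<subseteq> Y" then show "\<phi> X \<subseteq> \<phi> Y"
      unfolding \<phi>_def F_def using PQ by auto
  qed
  have inj: "inj \<phi>" by (rule injI) (use ord in blast)
  have cs: "complete_sublattice W (range \<phi>)"
    unfolding complete_sublattice_def
  proof -
  { fix T assume T: "T \<subseteq> range \<phi> \<and> T \<noteq> {}"
    define Z where "Z = {X. \<phi> X \<in> T}"
    have TZ: "T = \<phi> ` Z" unfolding Z_def using T by auto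
    have Zne: "Z \<noteq> {}" using T TZ by auto
    have phieq: "\<phi> X = {c\<in>A. c \<in> (if m c \<in> X then y (b (Suc (m c))) else y (b (m c)))}" for X
      unfolding \<phi>_def F_def by simp
    note L = lat_both[of "\<lambda>k. y (b k)" "\<lambda>k. y (b (Suc k))", OF PQ Zne phieq]
    from L(1) L(2) have "\<Union>(\<phi> ` Z) = \<phi> (\<Union>Z)" "\<Inter>(\<phi> ` Z) = \<phi> (\<Inter>Z)" by simp_all
    then have "\<Union>T \<in> range \<phi> \<and> \<Inter>T \<in> range \<phi>" using TZ by simp
  }
  then have "\<forall>T. T \<subseteq> range \<phi> \<and> T \<noteq> {} \<longrightarrow> \<Union>T \<in> range \<phi> \<and> \<Inter>T \<in> range \<phi>" by blast
  moreover have "range \<phi> \<subseteq> W" using phiW by auto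
  ultimately show "range \<phi> \<subseteq> W \<and> (\<forall>T. T \<subseteq> range \<phi> \<and> T \<noteq> {} \<longrightarrow> \<Union>T \<in> range \<phi> \<and> \<Inter>T \<in> range \<phi>)" by (rule conjI[rotated])
  qed
  have "bij_betw \<phi> (UNIV :: nat set set) (range \<phi>)" using inj by (simp add: bij_betw_def)
  moreover have "range \<phi> \<subseteq> W" using phiW by auto
  ultimately show ?thesis using inj cs ord by blast
qed

end
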